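(* In the cone setting of the context, for each $h,g\in\mathcal C_{\mathbb C}$, \[E(h,g)=\Big\{\frac{\ell(h)}{\ell(g)}:\ell\in\hat{\mathcal C}'_{\mathbb C}\Big\}.\]
   Context: Cone setting. $V$ is a real topological vector space, $\mathcal S\subset V'$ a set of linear functionals such that $\ell(x)=0$ for all $\ell\in\mathcal S$ implies $x=0$, $C_{\mathbb R}=\{h\in V\setminus\{0\}:\ell(h)\ge0\ \forall\ell\in\mathcal S\}$, and $e\in C_{\mathbb R}$ is such that for every $h\in V$ some $\lambda\ge0$ has $\lambda e-h\in C_{\mathbb R}$. Norm $\|h\|=\inf\{\lambda\ge0:\ell(\lambda e\pm h)\ge0\ \forall\ell\in\mathcal S\}$; $\mathcal B_{\mathbb R}$ the completion of $V$; $\mathcal C_{\mathbb R}=\{h\in\mathcal B_{\mathbb R}\setminus\{0\}:\ell(h)\ge0\ \forall\ell\in\mathcal S\}$; $\mathcal C'_{\mathbb R}=\{\ell\in\mathcal B'_{\mathbb R}:\ell(h)\ge0\ \forall h\in\mathcal C_{\mathbb R}\}$; $\mathring{\mathcal C}'_{\mathbb R}=\{\ell\in\mathcal C'_{\mathbb R}:\ell(x)>0\ \forall x\in\mathcal C_{\mathbb R}\}$. $\mathcal S_*$ is the weak-$*$ closure of the convex hull of $\{\lambda\ell:\lambda>0,\ell\in\mathcal S\}$; there exist $m\in\mathcal S_*$, $\kappa\in(0,1)$ with $m(e)=1$ and $m(h)\ge\kappa\|h\|$ on $\mathcal C_{\mathbb R}$. $\mathcal B_{\mathbb C}$ is the complexification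 of $\mathcal B_{\mathbb R}$, real functionals extended complex-linearly. $\mathcal C_{\mathbb C}=\{z(x+iy):z\in\mathbb C\setminus\{0\},x,y\in\mathcal C_{\mathbb R}\}$, $\mathcal C'_{\mathbb C}=\{\ell\in\mathcal B'_{\mathbb C}:\ell(h)\ne0\ \forall h\in\mathcal C_{\mathbb C}\}$, $\hat{\mathcal C}'_{\mathbb C}=\{\pm\ell\pm ip:\ell,p\in\mathring{\mathcal C}'_{\mathbb R}\}$. For $h,g\in\mathcal C_{\mathbb C}$, $E(h,g)=\{\ell(h)/\ell(g):\ell\in\mathcal C'_{\mathbb C}\}$. *)

theory Defs
  imports "HOL-Analysis.Analysis"
begin

text \<open>The completion B_R is represented by a real Banach space type 'b in which V is a
dense linear subspace; the norm of 'b restricted to V is the order-unit norm.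
Functionals in S are represented by their (unique) continuous extensions to B_R.
The complexification B_C is represented by pairs (x,y) standing for x + i y.
A continuous complex-linear functional on B_C is represented by a bounded real-linear
map f : 'b => complex, acting by f(x + i y) = f x + i f y.\<close>

definition CR :: "('b::real_normed_vector \<Rightarrow> real) set \<Rightarrow> 'b set" where
  "CR S = {h. h \<noteq> 0 \<and> (\<forall>l\<in>S. 0 \<le> l h)}"

definition CR_dual :: "('b::real_normed_vector \<Rightarrow> real) set \<Rightarrow> ('b \<Rightarrow> real) set" where
  "CR_dual S = {l. bounded_linear l \<and> (\<forall>h\<in>CR S. 0 \<le> l h)}"

definition CR_dual_int :: "('b::real_normed_vector \<Rightarrow> real) set \<Rightarrow> ('b \<Rightarrow> real) set" where
  "CR_dual_int S = {l \<in> CR_dual S. \<forall>x\<in>CR S. 0 < l x}"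

definition order_unit_norm :: "('b::real_normed_vector \<Rightarrow> real) set \<Rightarrow> 'b \<Rightarrow> 'b \<Rightarrow> real" where
  "order_unit_norm S e h =
     Inf {lam. 0 \<le> lam \<and> (\<forall>l\<in>S. 0 \<le> l (lam *\<^sub>R e + h) \<and> 0 \<le> l (lam *\<^sub>R e - h))}"

text \<open>Convex hull of the cone generated by S, written out as finite convex combinations.\<close>
definition cone_convhull :: "('b \<Rightarrow> real) set \<Rightarrow> ('b \<Rightarrow> real) set" where
  "cone_convhull S = {(\<lambda>x. \<Sum>i<n. c i * (lam i * f i x)) | (n::nat) c lam f.
      0 < n \<and> (\<forall>i<n. 0 \<le> c i \<and> 0 < lam i \<and> f i \<in> S) \<and> (\<Sum>i<n. c i) = 1}"

text \<open>Weak-* closure in B_R': the pointwise (product-topology) closure intersected with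
the continuous dual (weak-* topology = subspace topology of pointwise convergence).\<close>
definition S_star :: "('b::real_normed_vector \<Rightarrow> real) set \<Rightarrow> ('b \<Rightarrow> real) set" where
  "S_star S = closure (cone_convhull S) \<inter> {l. bounded_linear l}"

definition cone_setting :: "'b::banach set \<Rightarrow> ('b \<Rightarrow> real) set \<Rightarrow> 'b \<Rightarrow> bool" where
  "cone_setting V S e \<longleftrightarrow>
     subspace V \<and> closure V = UNIV \<and>
     (\<forall>l\<in>S. bounded_linear l) \<and>
     (\<forall>x\<in>V. (\<forall>l\<in>S. l x = 0) \<longrightarrow> x = 0) \<and>
     e \<in> V \<inter> CR S \<and>
     (\<forall>h\<in>V. \<exists>lam\<ge>0. lam *\<^sub>R e - h \<in> V \<inter> CR S) \<and>
     (\<forall>h\<in>V. norm h = order_unit_norm S e h) \<and>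
     (\<exists>m\<in>S_star S. \<exists>\<kappa>. 0 < \<kappa> \<and> \<kappa> < 1 \<and> m e = 1 \<and> (\<forall>h\<in>CR S. \<kappa> * norm h \<le> m h))"

definition cmul :: "complex \<Rightarrow> 'b::real_vector \<times> 'b \<Rightarrow> 'b \<times> 'b" where
  "cmul z h = (Re z *\<^sub>R fst h - Im z *\<^sub>R snd h, Re z *\<^sub>R snd h + Im z *\<^sub>R fst h)"

definition capply :: "('b \<Rightarrow> complex) \<Rightarrow> 'b \<times> 'b \<Rightarrow> complex" where
  "capply f h = f (fst h) + \<i> * f (snd h)"

definition CC :: "('b::real_normed_vector \<Rightarrow> real) set \<Rightarrow> ('b \<times> 'b) set" where
  "CC S = {cmul z (x, y) | z x y. z \<noteq> 0 \<and> x \<in> CR S \<and> y \<in> CR S}"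

definition CC_dual :: "('b::real_normed_vector \<Rightarrow> real) set \<Rightarrow> ('b \<Rightarrow> complex) set" where
  "CC_dual S = {f. bounded_linear f \<and> (\<forall>h\<in>CC S. capply f h \<noteq> 0)}"

definition CC_dual_hat :: "('b::real_normed_vector \<Rightarrow> real) set \<Rightarrow> ('b \<Rightarrow> complex) set" where
  "CC_dual_hat S = {(\<lambda>x. s * complex_of_real (l x) + t * \<i> * complex_of_real (p x)) | s t l p.
      s \<in> {1, -1} \<and> t \<in> {1, -1} \<and> l \<in> CR_dual_int S \<and> p \<in> CR_dual_int S}"

definition Eset :: "('b::real_normed_vector \<Rightarrow> real) set \<Rightarrow> 'b \<times> 'b \<Rightarrow> 'b \<times> 'b \<Rightarrow> complex set" where
  "Eset S h g = {capply f h / capply f g | f. f \<in> CC_dual S}"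

end

theory Submission
  imports Defs
begin

lemma capply_cmul:
  assumes "linear f"
  shows "capply f (cmul z h) = z * capply f h"
proof -
  have z: "z = complex_of_real (Re z) + \<i> * complex_of_real (Im z)"
    by (simp add: complex_eq_iff)
  have "capply f (cmul z h) = complex_of_real (Re z) * f (fst h) - complex_of_real (Im z) * f (snd h)
     + \<i> * (complex_of_real (Re z) * f (snd h) + complex_of_real (Im z) * f (fst h))"
    using assms by (simp add: capply_def cmul_def linear_diff linear_add linear_scale scaleR_conv_of_real)
  also have "\<dots> = (complex_of_real (Re z) + \<i> * complex_of_real (Im z)) * (f (fst h) + \<i> * f (snd h))"
    by (simp add: algebra_simps)
  finally show ?thesis using z by (simp add: capply_def)
qed

lemma inner_v:
  fixes u :: "'i::finite \<Rightarrow> 'b::real_normed_vector" and l :: "'b \<Rightarrow> real"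
  assumes "linear l"
  shows "inner a (\<chi> i. l (u i)) = l (\<Sum>i\<in>UNIV. (a$i) *\<^sub>R u i)"
  using assms by (simp add: inner_vec_def linear_sum linear_scale)

lemma delta_lim:
  fixes A B :: real
  assumes "\<And>d. d > 0 \<Longrightarrow> 0 \<le> A + d * B"
  shows "0 \<le> A"
proof (rule ccontr)
  assume "\<not> 0 \<le> A"
  define d where "d = - A / (2 * (\<bar>B\<bar> + 1))"
  have dp: "d > 0" unfolding d_def using \<open>\<not> 0 \<le> A\<close> by (intro divide_pos_pos) auto
  have "d * B \<le> d * \<bar>B\<bar>" using dp by (simp add: mult_left_mono)
  also have "\<dots> \<le> d * (\<bar>B\<bar> + 1)" using dp by simp
  also have "\<dots> = - A / 2" unfolding d_def by (simp add: field_simps)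
  finally have "A + d * B < 0" using \<open>\<not> 0 \<le> A\<close> by linarith
  with assms[OF dp] show False by linarith
qed

lemma lin_lim:
  fixes x b :: real
  assumes "\<And>t. t * x \<le> b"
  shows "x = 0"
proof (rule ccontr)
  assume "x \<noteq> 0"
  have "((\<bar>b\<bar> + 1) / x) * x \<le> b" by (rule assms)
  with \<open>x \<noteq> 0\<close> show False by simp
qed

lemma CRdi_iff: "l \<in> CR_dual_int S \<longleftrightarrow> bounded_linear l \<and> (\<forall>x\<in>CR S. 0 < l x)"
  unfolding CR_dual_int_def CR_dual_def by (auto intro: less_imp_le)

lemma bl_comb:
  fixes l1 l2 :: "'b::real_normed_vector \<Rightarrow> real"
  assumes "bounded_linear l1" "bounded_linear l2"
  shows "bounded_linear (\<lambda>x. a * l1 x + b * l2 x)"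
  by (intro bounded_linear_add bounded_linear_compose[OF bounded_linear_mult_right] assms)

lemma key:
  fixes u :: "'i::finite \<Rightarrow> 'b::real_normed_vector" and f :: "'b \<Rightarrow> complex"
  assumes m: "m \<in> CR_dual_int S"
    and S: "\<forall>s\<in>S. bounded_linear s"
    and f: "bounded_linear f"
    and fne: "\<And>w w'. w \<in> CR S \<Longrightarrow> w' \<in> CR S \<Longrightarrow> f w + \<i> * f w' \<noteq> 0"
    and u0: "u i0 \<in> CR S"
  shows "\<exists>l p c. l \<in> CR_dual_int S \<and> p \<in> CR_dual_int S \<and> c \<noteq> 0 \<and>
     (\<forall>i. complex_of_real (l (u i)) + \<i> * complex_of_real (p (u i)) = c * f (u i))"
proof -
  define v :: "('b \<Rightarrow> real) \<Rightarrow> real^'i" where "v l = (\<chi> i. l (u i))" for l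
  define W :: "real^'i \<Rightarrow> 'b" where "W a = (\<Sum>i\<in>UNIV. (a$i) *\<^sub>R u i)" for a
  define N where "N = {a. W a = 0}"
  define Re_f where "Re_f c = (\<lambda>x. Re (c * f x))" for c
  define Im_f where "Im_f c = (\<lambda>x. Im (c * f x))" for c
  define vf where "vf c = (v (Re_f c), v (Im_f c))" for c
  define P where "P = {(v l + n1, v p + n2) | l p n1 n2. l \<in> CR_dual_int S \<and> p \<in> CR_dual_int S \<and> n1 \<in> N \<and> n2 \<in> N}"
  define T where "T = range vf"
  have linRe: "linear (Re_f c)" for c
    unfolding Re_f_def
    by (rule bounded_linear.linear, rule bounded_linear_compose[OF bounded_linear_Re bounded_linear_compose[OF bounded_linear_mult_right f]])
  have linIm: "linear (Im_f c)" for c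
    unfolding Im_f_def
    by (rule bounded_linear.linear, rule bounded_linear_compose[OF bounded_linear_Im bounded_linear_compose[OF bounded_linear_mult_right f]])
  have inner_v: "inner a (v l) = l (W a)" if "linear l" for a l
    using that by (simp add: v_def W_def inner_vec_def linear_sum linear_scale)
  have v_comb: "v (\<lambda>x. a * l1 x + b * l2 x) = a *\<^sub>R v l1 + b *\<^sub>R v l2" for a b l1 l2
    by (simp add: v_def vec_eq_iff)
  have W_add: "W (x + y) = W x + W y" for x y
    by (simp add: W_def scaleR_add_left sum.distrib)
  have W_scale: "W (t *\<^sub>R x) = t *\<^sub>R W x" for t x
    by (simp add: W_def scaleR_sum_right)
  have N_comb: "a *\<^sub>R x + b *\<^sub>R y \<in> N" if "x \<in> N" "y \<in> N" for a b x y
    using that by (simp add: N_def W_add W_scale)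
  have vf_comb: "vf (complex_of_real a * c1 + complex_of_real b * c2) = a *\<^sub>R vf c1 + b *\<^sub>R vf c2" for a b c1 c2
  proof -
    have "Re_f (complex_of_real a * c1 + complex_of_real b * c2) = (\<lambda>x. a * Re_f c1 x + b * Re_f c2 x)"
      by (rule ext) (simp add: Re_f_def algebra_simps)
    moreover have "Im_f (complex_of_real a * c1 + complex_of_real b * c2) = (\<lambda>x. a * Im_f c1 x + b * Im_f c2 x)"
      by (rule ext) (simp add: Im_f_def algebra_simps)
    ultimately show ?thesis by (simp add: vf_def v_comb)
  qed
  have comb_pos: "l \<in> CR_dual_int S \<Longrightarrow> p \<in> CR_dual_int S \<Longrightarrow> 0 \<le> a \<Longrightarrow> 0 \<le> b \<Longrightarrow> a + b = 1
     \<Longrightarrow> (\<lambda>x. a * l x + b * p x) \<in> CR_dual_int S" for l p a b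
  proof -
    assume l: "l \<in> CR_dual_int S" and p: "p \<in> CR_dual_int S" and ab: "0 \<le> a" "0 \<le> b" "a + b = 1"
    have "0 < a * l x + b * p x" if "x \<in> CR S" for x
    proof -
      have "0 < l x" "0 < p x" using l p that by (auto simp: CRdi_iff)
      then show ?thesis using ab
        by (cases "a = 0") (auto intro: add_pos_nonneg add_nonneg_pos mult_pos_pos)
    qed
    then show ?thesis using l p by (auto simp: CRdi_iff intro: bl_comb)
  qed
  have convP: "convex P"
    unfolding convex_def
  proof (intro ballI allI impI)
    fix x y and a b :: real
    assume x: "x \<in> P" and y: "y \<in> P" and ab: "0 \<le> a" "0 \<le> b" "a + b = 1"
    from x obtain l1 p1 n1 n2 where x': "x = (v l1 + n1, v p1 + n2)" "l1 \<in> CR_dual_int S" "p1 \<in> CR_dual_int S" "n1 \<in> N" "n2 \<in> N"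
      unfolding P_def by blast
    from y obtain l2 p2 n1' n2' where y': "y = (v l2 + n1', v p2 + n2')" "l2 \<in> CR_dual_int S" "p2 \<in> CR_dual_int S" "n1' \<in> N" "n2' \<in> N"
      unfolding P_def by blast
    have "a *\<^sub>R x + b *\<^sub>R y = (v (\<lambda>z. a * l1 z + b * l2 z) + (a *\<^sub>R n1 + b *\<^sub>R n1'),
        v (\<lambda>z. a * p1 z + b * p2 z) + (a *\<^sub>R n2 + b *\<^sub>R n2'))"
      unfolding x'(1) y'(1) v_comb by (simp add: algebra_simps)
    then show "a *\<^sub>R x + b *\<^sub>R y \<in> P"
      unfolding P_def using x' y' ab by (blast intro: comb_pos N_comb)
  qed
  have convT: "convex T"
    unfolding convex_def T_def
  proof (intro ballI allI impI)
    fix x y and a b :: real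
    assume "x \<in> range vf" "y \<in> range vf"
    then obtain c1 c2 where "x = vf c1" "y = vf c2" by blast
    then show "a *\<^sub>R x + b *\<^sub>R y \<in> range vf"
      using vf_comb[of a c1 b c2] by (metis rangeI)
  qed
  have "P \<inter> T \<noteq> {}"
  proof
    assume disj: "P \<inter> T = {}"
    have "(v m + 0, v m + 0) \<in> P" unfolding P_def N_def W_def using m
      by (intro CollectI exI[of _ m] exI[of _ m] exI[of _ 0] exI[of _ 0]) simp
    hence Pne: "P \<noteq> {}" by blast
    have Tne: "T \<noteq> {}" unfolding T_def by simp
    obtain a b0 where a0: "a \<noteq> 0" and aT: "\<forall>x\<in>T. inner a x \<le> b0" and aP: "\<forall>x\<in>P. inner a x \<ge> b0"
      using separating_hyperplane_sets[OF convT convP Tne Pne] disj by blast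
    obtain a1 a2 where a12: "a = (a1, a2)" by (cases a)
    define w1 where "w1 = W a1"
    define w2 where "w2 = W a2"
    have val: "inner a (vf c) = Re_f c w1 + Im_f c w2" for c
      unfolding a12 vf_def w1_def w2_def using linRe linIm by (simp add: inner_v)
    have val0: "Re_f c w1 + Im_f c w2 = 0" for c
    proof (rule lin_lim)
      fix t
      have "inner a (vf (complex_of_real t * c + complex_of_real 0 * c)) \<le> b0"
        using aT unfolding T_def by blast
      then show "t * (Re_f c w1 + Im_f c w2) \<le> b0"
        by (simp only: vf_comb val[symmetric]) (simp add: inner_add_right)
    qed
    have b0: "0 \<le> b0"
      using aT val[of 0] unfolding T_def by (simp add: Re_f_def Im_f_def) (metis rangeI)
    have Pineq: "b0 \<le> l w1 + inner a1 n1 + p w2 + inner a2 n2"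
      if "l \<in> CR_dual_int S" "p \<in> CR_dual_int S" "n1 \<in> N" "n2 \<in> N" for l p n1 n2
    proof -
      have "(v l + n1, v p + n2) \<in> P" unfolding P_def using that by blast
      with aP have "b0 \<le> inner a (v l + n1, v p + n2)" by blast
      moreover have "linear l" "linear p" using that by (auto simp: CRdi_iff bounded_linear.linear)
      ultimately show ?thesis unfolding a12 w1_def w2_def by (simp add: inner_add_right inner_v)
    qed
    have zN: "0 \<in> N" by (simp add: N_def W_def)
    have sN: "t *\<^sub>R n \<in> N" if "n \<in> N" for t n
      using N_comb[OF that zN, of t 0] by simp
    have a1N: "inner a1 n = 0" if "n \<in> N" for n
    proof -
      have "inner a1 n = 0"
      proof (rule lin_lim)
        fix t
        have "b0 \<le> m w1 + inner a1 ((- t) *\<^sub>R n) + m w2 + inner a2 0"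
          by (rule Pineq[OF m m sN[OF that] zN])
        then show "t * inner a1 n \<le> m w1 + m w2 - b0" by simp
      qed
      then show ?thesis by simp
    qed
    have a2N: "inner a2 n = 0" if "n \<in> N" for n
    proof -
      have "inner a2 n = 0"
      proof (rule lin_lim)
        fix t
        have "b0 \<le> m w1 + inner a1 0 + m w2 + inner a2 ((- t) *\<^sub>R n)"
          by (rule Pineq[OF m m zN sN[OF that]])
        then show "t * inner a2 n \<le> m w1 + m w2 - b0" by simp
      qed
      then show ?thesis by simp
    qed
    have Pineq2: "0 \<le> l w1 + p w2" if "l \<in> CR_dual_int S" "p \<in> CR_dual_int S" for l p
      using Pineq[OF that zN zN] b0 by simp
    have mbl: "bounded_linear m" and mpos: "\<And>x. x \<in> CR S \<Longrightarrow> 0 < m x" using m by (auto simp: CRdi_iff)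
    have sdm: "(\<lambda>x. s x + d * m x) \<in> CR_dual_int S" if "s \<in> S" "d > 0" for s d
    proof -
      have "bounded_linear (\<lambda>x. 1 * s x + d * m x)" using S that mbl by (intro bl_comb) auto
      moreover have "0 < s x + d * m x" if "x \<in> CR S" for x
        using \<open>s \<in> S\<close> \<open>d > 0\<close> mpos[OF that] that unfolding CR_def
        by (auto intro: add_nonneg_pos)
      ultimately show ?thesis by (simp add: CRdi_iff)
    qed
    have dm: "(\<lambda>x. d * m x) \<in> CR_dual_int S" if "d > 0" for d
    proof -
      have "bounded_linear (\<lambda>x. 0 * m x + d * m x)" using mbl by (intro bl_comb) auto
      moreover have "0 < d * m x" if "x \<in> CR S" for x using mpos[OF that] \<open>d>0\<close> by simp
      ultimately show ?thesis by (simp add: CRdi_iff)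
    qed
    have w1C: "w1 = 0 \<or> w1 \<in> CR S"
    proof -
      have "0 \<le> s w1" if "s \<in> S" for s
      proof (rule delta_lim)
        fix d :: real assume "d > 0"
        from Pineq2[OF sdm[OF that this] dm[OF this]] show "0 \<le> s w1 + d * (m w1 + m w2)"
          by (simp add: algebra_simps)
      qed
      then show ?thesis unfolding CR_def by auto
    qed
    have w2C: "w2 = 0 \<or> w2 \<in> CR S"
    proof -
      have "0 \<le> s w2" if "s \<in> S" for s
      proof (rule delta_lim)
        fix d :: real assume "d > 0"
        from Pineq2[OF dm[OF this] sdm[OF that this]] show "0 \<le> s w2 + d * (m w1 + m w2)"
          by (simp add: algebra_simps)
      qed
      then show ?thesis unfolding CR_def by auto
    qed
    have e1: "Re (f w1) + Im (f w2) = 0" using val0[of 1] by (simp add: Re_f_def Im_f_def)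
    have e2: "- Im (f w1) + Re (f w2) = 0" using val0[of \<i>] by (simp add: Re_f_def Im_f_def)
    have fz: "f w2 + \<i> * f w1 = 0"
      using e1 e2 by (simp add: complex_eq_iff)
    have f0: "f 0 = 0" using f by (simp add: linear_simps)
    show False
    proof (cases "w1 = 0")
      case True
      show False
      proof (cases "w2 = 0")
        case True
        have "a1 \<in> N" "a2 \<in> N" using \<open>w1 = 0\<close> True by (auto simp: N_def w1_def w2_def)
        then have "inner a1 a1 = 0" "inner a2 a2 = 0" using a1N a2N by auto
        then have "a = 0" unfolding a12 by (simp add: zero_prod_def)
        with a0 show False by simp
      next
        case False
        then have "w2 \<in> CR S" using w2C by simp
        moreover have "f w2 = 0" using fz \<open>w1 = 0\<close> f0 by simp
        ultimately show False using fne[of w2 w2] by simp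
      qed
    next
      case False
      then have c1: "w1 \<in> CR S" using w1C by simp
      show False
      proof (cases "w2 = 0")
        case True
        then have "f w1 = 0" using fz f0 by simp
        then show False using fne[OF c1 c1] by simp
      next
        case False
        then have c2: "w2 \<in> CR S" using w2C by simp
        show False using fne[OF c2 c1] fz by simp
      qed
    qed
  qed
  then obtain l p n1 n2 c where lp: "l \<in> CR_dual_int S" "p \<in> CR_dual_int S" and n: "n1 \<in> N" "n2 \<in> N"
    and eq: "(v l + n1, v p + n2) = vf c"
    unfolding P_def T_def by blast
  have ll: "linear l" "linear p" using lp by (auto simp: CRdi_iff bounded_linear.linear)
  have W0: "W n1 = 0" "W n2 = 0" using n by (auto simp: N_def)
  have "n1 = v (Re_f c) - v l" using eq by (auto simp: vf_def eq_diff_eq add.commute)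
  then have "inner n1 n1 = inner n1 (v (Re_f c)) - inner n1 (v l)"
    by (metis inner_diff_right)
  also have "\<dots> = 0" using W0 ll linRe by (simp add: inner_v linear_0)
  finally have n10: "n1 = 0" by simp
  have "n2 = v (Im_f c) - v p" using eq by (auto simp: vf_def eq_diff_eq add.commute)
  then have "inner n2 n2 = inner n2 (v (Im_f c)) - inner n2 (v p)"
    by (metis inner_diff_right)
  also have "\<dots> = 0" using W0 ll linIm by (simp add: inner_v linear_0)
  finally have n20: "n2 = 0" by simp
  have lu: "l (u i) = Re (c * f (u i))" "p (u i) = Im (c * f (u i))" for i
    using eq n10 n20 by (auto simp: vf_def v_def Re_f_def Im_f_def vec_eq_iff)
  have cz: "c \<noteq> 0"
  proof
    assume "c = 0"
    then have "l (u i0) = 0" using lu by simp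
    moreover have "0 < l (u i0)" using lp u0 by (auto simp: CRdi_iff)
    ultimately show False by simp
  qed
  show ?thesis
    using lp cz lu by (intro exI[of _ l] exI[of _ p] exI[of _ c]) (auto simp: complex_eq_iff)
qed

lemma hat_sub:
  assumes F: "F \<in> CC_dual_hat S"
  shows "F \<in> CC_dual S"
proof -
  obtain s t l p where Fd: "F = (\<lambda>x. s * complex_of_real (l x) + t * \<i> * complex_of_real (p x))"
    and st: "s \<in> {1, -1}" "t \<in> {1, -1}" and lp: "l \<in> CR_dual_int S" "p \<in> CR_dual_int S"
    using F unfolding CC_dual_hat_def by blast
  have bl: "bounded_linear l" "bounded_linear p" using lp by (auto simp: CRdi_iff)
  have blF: "bounded_linear F"
    unfolding Fd
    by (intro bounded_linear_add bounded_linear_compose[OF bounded_linear_mult_right]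
        bounded_linear_compose[OF bounded_linear_of_real] bl)
  have "capply F hh \<noteq> 0" if hhC: "hh \<in> CC S" for hh
  proof -
    obtain z x y where hh: "hh = cmul z (x, y)" "z \<noteq> 0" "x \<in> CR S" "y \<in> CR S"
      using hhC unfolding CC_def by blast
    have pos: "0 < l x" "0 < l y" "0 < p x" "0 < p y" using lp hh by (auto simp: CRdi_iff)
    have "capply F (x, y) \<noteq> 0"
      using st pos by (auto simp: capply_def Fd complex_eq_iff)
    then show ?thesis
      unfolding hh(1) capply_cmul[OF bounded_linear.linear[OF blF]] using hh(2) by simp
  qed
  then show ?thesis using blF by (simp add: CC_dual_def)
qed

theorem lemma5p9:
  fixes V :: "'b::banach set" and S :: "('b \<Rightarrow> real) set" and e :: 'b
    and h g :: "'b \<times> 'b"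
  assumes "cone_setting V S e"
    and "h \<in> CC S" and "g \<in> CC S"
  shows "Eset S h g = {capply f h / capply f g | f. f \<in> CC_dual_hat S}"
proof -
  obtain m \<kappa> where mS: "m \<in> S_star S" and k: "0 < \<kappa>" and mk: "\<forall>h\<in>CR S. \<kappa> * norm h \<le> m h"
  proof -
    from assms(1) have "\<exists>m\<in>S_star S. \<exists>\<kappa>. 0 < \<kappa> \<and> \<kappa> < 1 \<and> m e = 1 \<and> (\<forall>h\<in>CR S. \<kappa> * norm h \<le> m h)"
      unfolding cone_setting_def by (elim conjE)
    then show ?thesis using that by blast
  qed
  have S: "\<forall>s\<in>S. bounded_linear s" using assms(1) unfolding cone_setting_def by (elim conjE)
  have m: "m \<in> CR_dual_int S"
  proof -
    have "bounded_linear m" using mS by (simp add: S_star_def)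
    moreover have "0 < m x" if "x \<in> CR S" for x
    proof -
      have "x \<noteq> 0" using that by (simp add: CR_def)
      then have "0 < \<kappa> * norm x" using k by simp
      also have "\<dots> \<le> m x" using mk that by blast
      finally show ?thesis .
    qed
    ultimately show ?thesis by (simp add: CRdi_iff)
  qed
  obtain z1 x1 y1 where h: "h = cmul z1 (x1, y1)" "x1 \<in> CR S" "y1 \<in> CR S"
    using assms(2) unfolding CC_def by blast
  obtain z2 x2 y2 where g: "g = cmul z2 (x2, y2)" "x2 \<in> CR S" "y2 \<in> CR S"
    using assms(3) unfolding CC_def by blast
  show ?thesis
  proof (rule set_eqI, rule iffI)
    fix r assume "r \<in> Eset S h g"
    then obtain f where r: "r = capply f h / capply f g" and fC: "f \<in> CC_dual S"
      unfolding Eset_def by blast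
    have fbl: "bounded_linear f" using fC by (simp add: CC_dual_def)
    have fne: "f w + \<i> * f w' \<noteq> 0" if "w \<in> CR S" "w' \<in> CR S" for w w'
    proof -
      have "cmul 1 (w, w') \<in> CC S" unfolding CC_def using that
        by (intro CollectI exI[of _ 1] exI[of _ w] exI[of _ w']) simp
      then have "capply f (cmul 1 (w, w')) \<noteq> 0" using fC by (simp add: CC_dual_def)
      then show ?thesis by (simp add: cmul_def capply_def)
    qed
    define u :: "bool \<times> bool \<Rightarrow> 'b" where
      "u = (\<lambda>(a, b). if a then (if b then x1 else y1) else (if b then x2 else y2))"
    have u0: "u (True, True) \<in> CR S" using h by (simp add: u_def)
    obtain l p c where lp: "l \<in> CR_dual_int S" "p \<in> CR_dual_int S" and cz: "c \<noteq> 0"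
      and eq: "\<forall>i. complex_of_real (l (u i)) + \<i> * complex_of_real (p (u i)) = c * f (u i)"
    proof -
      have "\<exists>l p c. l \<in> CR_dual_int S \<and> p \<in> CR_dual_int S \<and> c \<noteq> 0 \<and>
       (\<forall>i. complex_of_real (l (u i)) + \<i> * complex_of_real (p (u i)) = c * f (u i))"
        by (rule key[where u=u and ?i0.0="(True, True)", OF m S fbl fne u0])
      then show ?thesis using that by (elim exE conjE)
    qed
    define L where "L = (\<lambda>x. 1 * complex_of_real (l x) + 1 * \<i> * complex_of_real (p x))"
    have LH: "L \<in> CC_dual_hat S" unfolding CC_dual_hat_def L_def using lp by blast
    have Llin: "linear L" using hat_sub[OF LH] by (simp add: CC_dual_def bounded_linear.linear)
    have flin: "linear f" using fbl by (simp add: bounded_linear.linear)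
    have Lu: "L w = c * f w" if "w \<in> {x1, y1, x2, y2}" for w
    proof -
      from that consider "w = x1" | "w = y1" | "w = x2" | "w = y2" by blast
      then have "\<exists>i. w = u i"
        by cases (auto simp: u_def intro: exI[of _ "(True, True)"] exI[of _ "(True, False)"]
            exI[of _ "(False, True)"] exI[of _ "(False, False)"])
      then obtain i where "w = u i" by blast
      then show ?thesis using spec[OF eq, of i] by (simp add: L_def)
    qed
    have "capply L (x1, y1) = c * capply f (x1, y1)"
      using Lu[of x1] Lu[of y1] by (simp add: capply_def algebra_simps)
    then have Lh: "capply L h = c * capply f h"
      unfolding h(1) capply_cmul[OF Llin] capply_cmul[OF flin] by simp
    have "capply L (x2, y2) = c * capply f (x2, y2)"
      using Lu[of x2] Lu[of y2] by (simp add: capply_def algebra_simps)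
    then have Lg: "capply L g = c * capply f g"
      unfolding g(1) capply_cmul[OF Llin] capply_cmul[OF flin] by simp
    have "r = capply L h / capply L g" unfolding r Lh Lg using cz by simp
    then show "r \<in> {capply f h / capply f g | f. f \<in> CC_dual_hat S}" using LH by blast
  next
    fix r assume "r \<in> {capply f h / capply f g | f. f \<in> CC_dual_hat S}"
    then obtain F where "r = capply F h / capply F g" "F \<in> CC_dual_hat S" by blast
    then show "r \<in> Eset S h g" unfolding Eset_def using hat_sub by blast
  qed
qed

end
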